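(* Let $O$ be an object of $\mathsf{CRP}_{\mathcal{L}^{(t)}_{m,q}}$ and let $A$ be a Lazardian $O$-algebra. An $A$-algebra $B$ is an object of $\mathsf{CRP}_A$ if and only if (regarded as an $O$-algebra) it is an object of $\mathsf{CRP}_O$. In particular, restriction of scalars $\mathsf{Alg}_A\to\mathsf{Alg}_O$ restricts to a functor $\mathsf{CRP}_A\to\mathsf{CRP}_O$.
   Context: Fix a prime $p$, $t\in\mathbf{Z}$, $m\in\mathbf{N}\cup\{\infty\}$, $q>1$ a power of $p$, and $\mathcal{L}^{(t)}_{m,q}:=\mathbf{Z}[\omega_i^{q^{-\infty}}\mid1\le i\le m][[\pi]]/(p-\sum_{i=1}^m\omega_i^{q^t}\pi^i,\pi^{m+1})$ (with $\pi^{\infty+1}:=0$). For a ring $R$ receiving a ring map from $\mathcal{L}^{(t)}_{m,q}$ (so $\pi$ has an image in $R$), $\mathsf{CRP}_R$ is the full subcategory of $R$-algebras $B$ such that $B$ is $\pi B$-adically complete, $B/\pi B$ is a perfect $\mathbf{F}_p$-algebra, and the multiplication map $\pi R\otimes_RB\to B$ is injective. A Lazardian $O$-algebra is an $O$-algebra $A$ that is $\pi A$-adically complete and such that $\pi O\otimes_OA\to A$ is injective. *)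

theory Defs
  imports Main "HOL-Computational_Algebra.Primes" "HOL-Library.Extended_Nat"
begin

definition ring_hom_tc :: "('r::comm_ring_1 \<Rightarrow> 's::comm_ring_1) \<Rightarrow> bool" where
  "ring_hom_tc h \<longleftrightarrow> h 1 = 1 \<and> (\<forall>x y. h (x + y) = h x + h y) \<and> (\<forall>x y. h (x * y) = h x * h y)"

definition pow_ideal :: "'r::comm_ring_1 \<Rightarrow> nat \<Rightarrow> 'r set" where
  "pow_ideal x n = {x ^ n * r | r. True}"

text \<open>x R-adic completeness: the canonical map R \<rightarrow> lim_n R/x^n R is bijective.
  An element of the inverse limit is represented by lifts f n of its components
  (f n a lift of the component in R/x^n R), compatibility meaning f (n+1) - f n \<in> x^n R.\<close>
definition adically_complete :: "'r::comm_ring_1 \<Rightarrow> bool" where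
  "adically_complete x \<longleftrightarrow>
     (\<forall>r. (\<forall>n. r \<in> pow_ideal x n) \<longrightarrow> r = 0) \<and>
     (\<forall>f :: nat \<Rightarrow> 'r. (\<forall>n. f (Suc n) - f n \<in> pow_ideal x n) \<longrightarrow>
        (\<exists>r. \<forall>n. r - f n \<in> pow_ideal x n))"

text \<open>R / x R is a perfect F_p-algebra: p = 0 in R/xR and Frobenius on R/xR is bijective.\<close>
definition perfect_mod :: "nat \<Rightarrow> 'r::comm_ring_1 \<Rightarrow> bool" where
  "perfect_mod p x \<longleftrightarrow>
     of_nat p \<in> pow_ideal x 1 \<and>
     (\<forall>b. b ^ p \<in> pow_ideal x 1 \<longrightarrow> b \<in> pow_ideal x 1) \<and>
     (\<forall>b. \<exists>c. b - c ^ p \<in> pow_ideal x 1)"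

text \<open>For an R-submodule M of R and an R-algebra B (structure map phi),
  M \<otimes>_R B is the free abelian group on M \<times> B (finitely supported functions
  M \<times> B \<Rightarrow> int) modulo the subgroup generated by the bilinearity/balancing relations.\<close>
definition delta :: "'x \<Rightarrow> 'x \<Rightarrow> int" where
  "delta z = (\<lambda>w. if w = z then 1 else 0)"

inductive_set tensor_rels :: "'r::comm_ring_1 set \<Rightarrow> ('r \<Rightarrow> 'b::comm_ring_1) \<Rightarrow> ('r \<times> 'b \<Rightarrow> int) set"
  for M :: "'r set" and \<phi> :: "'r \<Rightarrow> 'b" where
  zero: "(\<lambda>_. 0) \<in> tensor_rels M \<phi>"
| addl: "x \<in> M \<Longrightarrow> x' \<in> M \<Longrightarrow>
     (\<lambda>z. delta (x + x', b) z - delta (x, b) z - delta (x', b) z) \<in> tensor_rels M \<phi>"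
| addr: "x \<in> M \<Longrightarrow>
     (\<lambda>z. delta (x, b + b') z - delta (x, b) z - delta (x, b') z) \<in> tensor_rels M \<phi>"
| smul: "x \<in> M \<Longrightarrow> r * x \<in> M \<Longrightarrow>
     (\<lambda>z. delta (r * x, b) z - delta (x, \<phi> r * b) z) \<in> tensor_rels M \<phi>"
| plus: "u \<in> tensor_rels M \<phi> \<Longrightarrow> v \<in> tensor_rels M \<phi> \<Longrightarrow> (\<lambda>z. u z + v z) \<in> tensor_rels M \<phi>"
| uminus: "u \<in> tensor_rels M \<phi> \<Longrightarrow> (\<lambda>z. - u z) \<in> tensor_rels M \<phi>"

text \<open>The multiplication map M \<otimes>_R B \<rightarrow> B, x \<otimes> b \<mapsto> phi(x) b, is injective.\<close>
definition mult_map_injective :: "'r::comm_ring_1 set \<Rightarrow> ('r \<Rightarrow> 'b::comm_ring_1) \<Rightarrow> bool" where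
  "mult_map_injective M \<phi> \<longleftrightarrow>
     (\<forall>u :: 'r \<times> 'b \<Rightarrow> int.
        finite {z. u z \<noteq> 0} \<and> {z. u z \<noteq> 0} \<subseteq> M \<times> UNIV \<and>
        (\<Sum>z\<in>{z. u z \<noteq> 0}. of_int (u z) * (\<phi> (fst z) * snd z)) = 0
        \<longrightarrow> u \<in> tensor_rels M \<phi>)"

text \<open>B (an R-algebra via phi) is an object of CRP_R, where piR is the image of \<pi> in R.\<close>
definition CRP :: "nat \<Rightarrow> 'r::comm_ring_1 \<Rightarrow> ('r \<Rightarrow> 'b::comm_ring_1) \<Rightarrow> bool" where
  "CRP p piR \<phi> \<longleftrightarrow>
     adically_complete (\<phi> piR) \<and> perfect_mod p (\<phi> piR) \<and>
     mult_map_injective (pow_ideal piR 1) \<phi>"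

text \<open>A is a Lazardian O-algebra (structure map f), \<pi> being the image of \<pi> in O.\<close>
definition lazardian :: "'o::comm_ring_1 \<Rightarrow> ('o \<Rightarrow> 'a::comm_ring_1) \<Rightarrow> bool" where
  "lazardian \<pi> f \<longleftrightarrow> adically_complete (f \<pi>) \<and> mult_map_injective (pow_ideal \<pi> 1) f"

text \<open>Data of a (\<pi>-adically continuous) ring map L^{(t)}_{m,q} \<rightarrow> O: omega i k is the image
  of omega_i^{q^k} (k \<in> Z), \<pi> the image of \<pi>.\<close>
definition L_map_data :: "nat \<Rightarrow> nat \<Rightarrow> int \<Rightarrow> enat \<Rightarrow> (nat \<Rightarrow> int \<Rightarrow> 'o::comm_ring_1) \<Rightarrow> 'o \<Rightarrow> bool" where
  "L_map_data p q t m \<omega> \<pi> \<longleftrightarrow>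
     (\<forall>i k. \<omega> i k ^ q = \<omega> i (k + 1)) \<and>
     (case m of
        enat k \<Rightarrow> \<pi> ^ (k + 1) = 0 \<and> of_nat p = (\<Sum>i=1..k. \<omega> i t * \<pi> ^ i)
      | \<infinity> \<Rightarrow> (\<forall>n. of_nat p - (\<Sum>i=1..n. \<omega> i t * \<pi> ^ i) \<in> pow_ideal \<pi> (Suc n)))"

text \<open>The tensor condition
  \<pi> L \<otimes>_L O \<rightarrow> O injective is expressed via Ann_L(\<pi>) = \<pi>^m L (= 0 for m = \<infinity>),
  i.e. Ann_O(\<pi>) \<subseteq> \<pi>^m O.\<close>
definition CRP_L :: "nat \<Rightarrow> enat \<Rightarrow> 'o::comm_ring_1 \<Rightarrow> bool" where
  "CRP_L p m \<pi> \<longleftrightarrow>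
     adically_complete \<pi> \<and> perfect_mod p \<pi> \<and>
     (\<forall>b. \<pi> * b = 0 \<longrightarrow>
        (case m of enat k \<Rightarrow> b \<in> pow_ideal \<pi> k | \<infinity> \<Rightarrow> b = 0))"

end

theory Submission imports Defs begin

definition push :: "('x \<Rightarrow> 'y) \<Rightarrow> ('x \<Rightarrow> int) \<Rightarrow> 'y \<Rightarrow> int" where
  "push F u = (\<lambda>w. \<Sum>z\<in>{z. u z \<noteq> 0}. u z * delta (F z) w)"

definition img :: "('r \<Rightarrow> 'b::comm_ring_1) \<Rightarrow> ('r \<times> 'b \<Rightarrow> int) \<Rightarrow> 'b" where
  "img \<phi> u = (\<Sum>z\<in>{z. u z \<noteq> 0}. of_int (u z) * (\<phi> (fst z) * snd z))"

lemma delta_app: "delta z w = (if w = z then 1 else 0)" by (simp add: delta_def)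

lemma sum_dl: "finite S \<Longrightarrow> a \<in> S \<Longrightarrow> (\<Sum>z\<in>S. delta a z * g z) = g a"
proof -
  assume "finite S" "a \<in> S"
  have "(\<Sum>z\<in>S. delta a z * g z) = (\<Sum>z\<in>S. if z = a then g z else 0)"
    by (rule sum.cong) (auto simp: delta_app)
  then show ?thesis using \<open>finite S\<close> \<open>a \<in> S\<close> by simp
qed

lemma sum_dl2: "finite S \<Longrightarrow> a \<in> S \<Longrightarrow> (\<Sum>z\<in>S. (of_int (delta a z) :: 'c::comm_ring_1) * g z) = g a"
proof -
  assume "finite S" "a \<in> S"
  have "(\<Sum>z\<in>S. (of_int (delta a z) :: 'c) * g z) = (\<Sum>z\<in>S. if z = a then g z else 0)"
    by (rule sum.cong) (auto simp: delta_app)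
  then show ?thesis using \<open>finite S\<close> \<open>a \<in> S\<close> by simp
qed

lemma push_S:
  assumes "finite S" "{z. u z \<noteq> 0} \<subseteq> S"
  shows "push F u w = (\<Sum>z\<in>S. u z * delta (F z) w)"
  unfolding push_def by (rule sum.mono_neutral_left) (use assms in auto)

lemma img_S:
  assumes "finite S" "{z. u z \<noteq> 0} \<subseteq> S"
  shows "img \<phi> u = (\<Sum>z\<in>S. of_int (u z) * (\<phi> (fst z) * snd z))"
  unfolding img_def by (rule sum.mono_neutral_left) (use assms in auto)

lemma unfold_S:
  assumes "finite S" "{z. u z \<noteq> 0} \<subseteq> S"
  shows "u w = (\<Sum>z\<in>S. u z * delta z w)"
proof -
  have "(\<Sum>z\<in>S. u z * delta z w) = (\<Sum>z\<in>S. if w = z then u z else 0)"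
    by (rule sum.cong) (auto simp: delta_app)
  also have "\<dots> = u w" using assms by (auto simp: sum.delta)
  finally show ?thesis by simp
qed

lemma push_supp: "{w. push F u w \<noteq> 0} \<subseteq> F ` {z. u z \<noteq> 0}"
proof
  fix w assume "w \<in> {w. push F u w \<noteq> 0}"
  then have "(\<Sum>z\<in>{z. u z \<noteq> 0}. u z * delta (F z) w) \<noteq> 0" by (simp add: push_def)
  then obtain z where "z \<in> {z. u z \<noteq> 0}" "u z * delta (F z) w \<noteq> 0"
    by (meson sum.not_neutral_contains_not_neutral)
  then show "w \<in> F ` {z. u z \<noteq> 0}" by (auto simp: delta_app split: if_splits)
qed

lemma push_fin: "finite {z. u z \<noteq> 0} \<Longrightarrow> finite {w. push F u w \<noteq> 0}"
  by (rule finite_subset[OF push_supp]) simp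

lemma push_delta: "push F (delta a) = delta (F a)"
proof
  fix w
  have "push F (delta a) w = (\<Sum>z\<in>{a}. delta a z * delta (F z) w)"
    by (rule push_S) (auto simp: delta_app)
  then show "push F (delta a) w = delta (F a) w" by (simp add: delta_app)
qed

lemma push_plus:
  assumes "finite {z. u z \<noteq> 0}" "finite {z. v z \<noteq> 0}"
  shows "push F (\<lambda>z. u z + v z) = (\<lambda>w. push F u w + push F v w)"
proof
  fix w
  let ?S = "{z. u z \<noteq> 0} \<union> {z. v z \<noteq> 0}"
  have f: "finite ?S" using assms by simp
  have "push F (\<lambda>z. u z + v z) w = (\<Sum>z\<in>?S. (u z + v z) * delta (F z) w)"
    by (rule push_S[OF f]) auto
  also have "\<dots> = (\<Sum>z\<in>?S. u z * delta (F z) w) + (\<Sum>z\<in>?S. v z * delta (F z) w)"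
    by (simp add: distrib_right sum.distrib)
  also have "\<dots> = push F u w + push F v w"
    using push_S[OF f, of u F w] push_S[OF f, of v F w] by auto
  finally show "push F (\<lambda>z. u z + v z) w = push F u w + push F v w" .
qed

lemma push_uminus: "push F (\<lambda>z. - u z) = (\<lambda>w. - push F u w)"
  by (simp add: push_def sum_negf)

lemma push_zero: "push F (\<lambda>_. 0) = (\<lambda>_. 0)"
  by (simp add: push_def)

lemma push_d3: "push F (\<lambda>z. delta a z - delta b z - delta c z) = (\<lambda>w. delta (F a) w - delta (F b) w - delta (F c) w)"
proof
  fix w
  have "push F (\<lambda>z. delta a z - delta b z - delta c z) w =
     (\<Sum>z\<in>{a,b,c}. (delta a z - delta b z - delta c z) * delta (F z) w)"
    by (rule push_S) (auto simp: delta_app)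
  also have "\<dots> = delta (F a) w - delta (F b) w - delta (F c) w"
  proof -
    have 1: "(\<Sum>z\<in>{a,b,c}. delta a z * delta (F z) w) = delta (F a) w" by (rule sum_dl) auto
    have 2: "(\<Sum>z\<in>{a,b,c}. delta b z * delta (F z) w) = delta (F b) w" by (rule sum_dl) auto
    have 3: "(\<Sum>z\<in>{a,b,c}. delta c z * delta (F z) w) = delta (F c) w" by (rule sum_dl) auto
    show ?thesis by (simp only: left_diff_distrib sum_subtractf 1 2 3)
  qed
  finally show "push F (\<lambda>z. delta a z - delta b z - delta c z) w = delta (F a) w - delta (F b) w - delta (F c) w" .
qed

lemma push_d2: "push F (\<lambda>z. delta a z - delta b z) = (\<lambda>w. delta (F a) w - delta (F b) w)"
proof
  fix w
  have "push F (\<lambda>z. delta a z - delta b z) w =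
     (\<Sum>z\<in>{a,b}. (delta a z - delta b z) * delta (F z) w)"
    by (rule push_S) (auto simp: delta_app)
  also have "\<dots> = delta (F a) w - delta (F b) w"
  proof -
    have 1: "(\<Sum>z\<in>{a,b}. delta a z * delta (F z) w) = delta (F a) w" by (rule sum_dl) auto
    have 2: "(\<Sum>z\<in>{a,b}. delta b z * delta (F z) w) = delta (F b) w" by (rule sum_dl) auto
    show ?thesis by (simp only: left_diff_distrib sum_subtractf 1 2)
  qed
  finally show "push F (\<lambda>z. delta a z - delta b z) w = delta (F a) w - delta (F b) w" .
qed

lemma rels_fin: "u \<in> tensor_rels M \<phi> \<Longrightarrow> finite {z. u z \<noteq> 0}"
proof (induct rule: tensor_rels.induct)
  case zero then show ?case by simp
next
  case (addl x x' b)
  show ?case by (rule finite_subset[of _ "{(x+x',b),(x,b),(x',b)}"]) (auto simp: delta_app)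
next
  case (addr x b b')
  show ?case by (rule finite_subset[of _ "{(x,b+b'),(x,b),(x,b')}"]) (auto simp: delta_app)
next
  case (smul x r b)
  show ?case by (rule finite_subset[of _ "{(r*x,b),(x,\<phi> r * b)}"]) (auto simp: delta_app)
next
  case (plus u v)
  show ?case by (rule finite_subset[of _ "{z. u z \<noteq> 0} \<union> {z. v z \<noteq> 0}"]) (use plus in auto)
next
  case (uminus u) then show ?case by simp
qed

lemma rels_diff: "u \<in> tensor_rels M \<phi> \<Longrightarrow> v \<in> tensor_rels M \<phi> \<Longrightarrow> (\<lambda>z. u z - v z) \<in> tensor_rels M \<phi>"
  using tensor_rels.plus[OF _ tensor_rels.uminus, of u M \<phi> v] by simp

lemma rels_scale_nat: "u \<in> tensor_rels M \<phi> \<Longrightarrow> (\<lambda>z. int n * u z) \<in> tensor_rels M \<phi>"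
proof (induct n)
  case 0 then show ?case using tensor_rels.zero by simp
next
  case (Suc n)
  then show ?case using tensor_rels.plus[OF Suc(1)[OF Suc(2)] Suc(2)] by (simp add: distrib_right add.commute)
qed

lemma rels_scale: "u \<in> tensor_rels M \<phi> \<Longrightarrow> (\<lambda>z. k * u z) \<in> tensor_rels M \<phi>"
proof (cases "k \<ge> 0")
  case True
  assume u: "u \<in> tensor_rels M \<phi>"
  then show ?thesis using rels_scale_nat[OF u, of "nat k"] True by simp
next
  case False
  assume u: "u \<in> tensor_rels M \<phi>"
  have "(\<lambda>z. - (int (nat (-k)) * u z)) \<in> tensor_rels M \<phi>"
    by (rule tensor_rels.uminus[OF rels_scale_nat[OF u]])
  then show ?thesis using False by simp
qed

lemma rels_sum: "finite S \<Longrightarrow> (\<forall>z\<in>S. g z \<in> tensor_rels M \<phi>) \<Longrightarrow> (\<lambda>w. \<Sum>z\<in>S. c z * g z w) \<in> tensor_rels M \<phi>"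
proof (induct S rule: finite_induct)
  case empty then show ?case using tensor_rels.zero by simp
next
  case (insert x F)
  then show ?case using tensor_rels.plus[OF rels_scale[of "g x" M \<phi> "c x"], of "\<lambda>w. \<Sum>z\<in>F. c z * g z w"] by simp
qed

lemma push_rels:
  assumes u: "u \<in> tensor_rels M \<phi>"
  and gl: "\<And>x x' b. x \<in> M \<Longrightarrow> x' \<in> M \<Longrightarrow> (\<lambda>w. delta (F (x + x', b)) w - delta (F (x, b)) w - delta (F (x', b)) w) \<in> tensor_rels M2 \<phi>2"
  and gr: "\<And>x b b'. x \<in> M \<Longrightarrow> (\<lambda>w. delta (F (x, b + b')) w - delta (F (x, b)) w - delta (F (x, b')) w) \<in> tensor_rels M2 \<phi>2"
  and gs: "\<And>x r b. x \<in> M \<Longrightarrow> r * x \<in> M \<Longrightarrow> (\<lambda>w. delta (F (r * x, b)) w - delta (F (x, \<phi> r * b)) w) \<in> tensor_rels M2 \<phi>2"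
  shows "push F u \<in> tensor_rels M2 \<phi>2"
  using u
proof (induct rule: tensor_rels.induct)
  case zero then show ?case by (simp add: push_zero tensor_rels.zero)
next
  case (addl x x' b) then show ?case by (simp add: push_d3 gl)
next
  case (addr x b b') then show ?case by (simp add: push_d3 gr)
next
  case (smul x r b) then show ?case by (simp add: push_d2 gs)
next
  case (plus u v)
  then show ?case by (simp add: push_plus rels_fin tensor_rels.plus)
next
  case (uminus u) then show ?case by (simp add: push_uminus tensor_rels.uminus)
qed

lemma push_push:
  assumes fin: "finite {z. u z \<noteq> 0}"
  shows "push G (push F u) = push (G \<circ> F) u"
proof
  fix w
  let ?S = "{z. u z \<noteq> 0}"
  have fS: "finite (F ` ?S)" using fin by simp
  have "push G (push F u) w = (\<Sum>y\<in>F ` ?S. push F u y * delta (G y) w)"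
    by (rule push_S[OF fS push_supp])
  also have "\<dots> = (\<Sum>y\<in>F ` ?S. (\<Sum>z\<in>?S. u z * delta (F z) y) * delta (G y) w)"
    using push_S[OF fin order_refl, of F] by simp
  also have "\<dots> = (\<Sum>z\<in>?S. u z * (\<Sum>y\<in>F ` ?S. delta (F z) y * delta (G y) w))"
    by (simp add: sum_distrib_right sum_distrib_left mult.assoc sum.swap[of _ "F ` ?S"])
  also have "\<dots> = (\<Sum>z\<in>?S. u z * delta ((G \<circ> F) z) w)"
    by (rule sum.cong) (simp_all add: sum_dl fS)
  also have "\<dots> = push (G \<circ> F) u w" by (simp add: push_def)
  finally show "push G (push F u) w = push (G \<circ> F) u w" .
qed

lemma img_push:
  assumes fin: "finite {z. u z \<noteq> 0}"
  and V: "\<And>z. u z \<noteq> 0 \<Longrightarrow> \<phi>2 (fst (F z)) * snd (F z) = \<phi>1 (fst z) * snd z"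
  shows "img \<phi>2 (push F u) = img \<phi>1 u"
proof -
  let ?S = "{z. u z \<noteq> 0}"
  have fS: "finite (F ` ?S)" using fin by simp
  have "img \<phi>2 (push F u) = (\<Sum>w\<in>F ` ?S. of_int (push F u w) * (\<phi>2 (fst w) * snd w))"
    by (rule img_S[OF fS push_supp])
  also have "\<dots> = (\<Sum>w\<in>F ` ?S. of_int (\<Sum>z\<in>?S. u z * delta (F z) w) * (\<phi>2 (fst w) * snd w))"
    using push_S[OF fin order_refl, of F] by simp
  also have "\<dots> = (\<Sum>z\<in>?S. of_int (u z) * (\<Sum>w\<in>F ` ?S. of_int (delta (F z) w) * (\<phi>2 (fst w) * snd w)))"
    by (simp add: sum_distrib_right sum_distrib_left mult.assoc sum.swap[of _ "F ` ?S"])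
  also have "\<dots> = (\<Sum>z\<in>?S. of_int (u z) * (\<phi>1 (fst z) * snd z))"
    by (rule sum.cong) (simp_all add: sum_dl2 fS V)
  also have "\<dots> = img \<phi>1 u" by (simp add: img_def)
  finally show ?thesis .
qed

lemma rels_Q:
  assumes fin: "finite {z. u z \<noteq> 0}"
  and Q: "\<And>z. u z \<noteq> 0 \<Longrightarrow> (\<lambda>w. delta z w - delta (G z) w) \<in> tensor_rels M \<phi>"
  shows "(\<lambda>w. u w - push G u w) \<in> tensor_rels M \<phi>"
proof -
  let ?S = "{z. u z \<noteq> 0}"
  have "(\<lambda>w. u w - push G u w) = (\<lambda>w. \<Sum>z\<in>?S. u z * (delta z w - delta (G z) w))"
  proof
    fix w
    show "u w - push G u w = (\<Sum>z\<in>?S. u z * (delta z w - delta (G z) w))"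
      using unfold_S[OF fin order_refl, of w] push_S[OF fin order_refl, of G w]
      by (simp add: right_diff_distrib sum_subtractf)
  qed
  also have "\<dots> \<in> tensor_rels M \<phi>"
    by (rule rels_sum[OF fin]) (use Q in auto)
  finally show ?thesis .
qed

lemma mem_pow1: "y \<in> pow_ideal x 1 \<longleftrightarrow> (\<exists>r. y = x * r)"
  by (auto simp: pow_ideal_def)

theorem proposition5p1:
  fixes p q :: nat and t :: int and m :: enat
    and \<omega> :: "nat \<Rightarrow> int \<Rightarrow> 'o::comm_ring_1" and \<pi> :: "'o"
    and f :: "'o \<Rightarrow> 'a::comm_ring_1" and g :: "'a \<Rightarrow> 'b::comm_ring_1"
  assumes "prime p" and "q > 1" and "\<exists>k. q = p ^ k"
    and "L_map_data p q t m \<omega> \<pi>"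
    and "CRP_L p m \<pi>"
    and "ring_hom_tc f" and "lazardian \<pi> f"
    and "ring_hom_tc g"
  shows "CRP p (f \<pi>) g \<longleftrightarrow> CRP p \<pi> (g \<circ> f)"

proof -
  have fh: "ring_hom_tc f" and gh: "ring_hom_tc g" by fact+
  have fadd: "\<And>x y. f (x + y) = f x + f y" and fmul: "\<And>x y. f (x * y) = f x * f y"
    using fh by (auto simp: ring_hom_tc_def)
  have gadd: "\<And>x y. g (x + y) = g x + g y" and gmul: "\<And>x y. g (x * y) = g x * g y"
    using gh by (auto simp: ring_hom_tc_def)
  define MO where "MO = pow_ideal \<pi> 1"
  define MA where "MA = pow_ideal (f \<pi>) 1"
  define h where "h = g \<circ> f"
  have happ: "\<And>x. h x = g (f x)" by (simp add: h_def)
  have piO: "\<pi> \<in> MO" unfolding MO_def mem_pow1 by (rule exI[of _ 1]) simp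
  have piA: "f \<pi> \<in> MA" unfolding MA_def mem_pow1 by (rule exI[of _ 1]) simp
  have lazinj: "mult_map_injective MO f" using assms(7) by (simp add: lazardian_def MO_def)
  have K0: "delta (\<pi>, g e * b) \<in> tensor_rels MO h" if e0: "f \<pi> * e = 0" for e b
  proof -
    have sup: "{z. delta (\<pi>, e) z \<noteq> 0} = {(\<pi>, e)}" by (auto simp: delta_app)
    have "delta (\<pi>, e) \<in> tensor_rels MO f"
      using lazinj unfolding mult_map_injective_def
      by (erule_tac x="delta (\<pi>, e)" in allE) (use sup piO e0 in \<open>auto simp: delta_app\<close>)
    then have "push (\<lambda>(x, s). (x, g s * b)) (delta (\<pi>, e)) \<in> tensor_rels MO h"
    proof (rule push_rels)
      fix x x' s assume "x \<in> MO" "x' \<in> MO"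
      then show "(\<lambda>w. delta ((\<lambda>(x, s). (x, g s * b)) (x + x', s)) w - delta ((\<lambda>(x, s). (x, g s * b)) (x, s)) w
          - delta ((\<lambda>(x, s). (x, g s * b)) (x', s)) w) \<in> tensor_rels MO h"
        by (simp add: tensor_rels.addl)
    next
      fix x s s' assume "x \<in> MO"
      then show "(\<lambda>w. delta ((\<lambda>(x, s). (x, g s * b)) (x, s + s')) w - delta ((\<lambda>(x, s). (x, g s * b)) (x, s)) w
          - delta ((\<lambda>(x, s). (x, g s * b)) (x, s')) w) \<in> tensor_rels MO h"
        by (simp add: gadd distrib_right tensor_rels.addr)
    next
      fix x r s assume "x \<in> MO" "r * x \<in> MO"
      have "(\<lambda>w. delta (r * x, g s * b) w - delta (x, h r * (g s * b)) w) \<in> tensor_rels MO h"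
        by (rule tensor_rels.smul) fact+
      then show "(\<lambda>w. delta ((\<lambda>(x, s). (x, g s * b)) (r * x, s)) w - delta ((\<lambda>(x, s). (x, g s * b)) (x, f r * s)) w)
          \<in> tensor_rels MO h"
        by (simp add: happ gmul mult.assoc)
    qed
    then show ?thesis by (simp add: push_delta)
  qed
  have K: "(\<lambda>w. delta (\<pi>, g s * b) w - delta (\<pi>, g s' * b) w) \<in> tensor_rels MO h"
    if ss: "f \<pi> * s = f \<pi> * s'" for s s' b
  proof -
    have e0: "f \<pi> * (s - s') = 0" using ss by (simp add: right_diff_distrib)
    have gs: "g s * b = g s' * b + g (s - s') * b"
      using gadd[of s' "s - s'"] by (simp add: distrib_right)
    have "(\<lambda>w. delta (\<pi>, g s' * b + g (s - s') * b) w - delta (\<pi>, g s' * b) w - delta (\<pi>, g (s - s') * b) w)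
      \<in> tensor_rels MO h" by (rule tensor_rels.addr[OF piO])
    from tensor_rels.plus[OF this K0[OF e0, of b]] show ?thesis by (simp add: gs)
  qed
  define sA where "sA y = (SOME s. y = f \<pi> * s)" for y
  have sA: "y = f \<pi> * sA y" if "y \<in> MA" for y
    using that unfolding MA_def mem_pow1 sA_def by (metis (mono_tags) someI_ex)
  have MAadd: "y + y' \<in> MA" if "y \<in> MA" "y' \<in> MA" for y y'
    using that unfolding MA_def mem_pow1 by (metis distrib_left)
  have MOf: "f x \<in> MA" if "x \<in> MO" for x
    using that unfolding MA_def MO_def mem_pow1 by (metis fmul)
  define T1 :: "'o \<times> 'b \<Rightarrow> 'a \<times> 'b" where "T1 = (\<lambda>(x, b). (f x, b))"
  define T2 :: "'a \<times> 'b \<Rightarrow> 'o \<times> 'b" where "T2 = (\<lambda>(y, b). (\<pi>, g (sA y) * b))"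
  have P1: "push T1 u \<in> tensor_rels MA g" if "u \<in> tensor_rels MO h" for u
    using that
  proof (rule push_rels)
    fix x x' b assume "x \<in> MO" "x' \<in> MO"
    then show "(\<lambda>w. delta (T1 (x + x', b)) w - delta (T1 (x, b)) w - delta (T1 (x', b)) w) \<in> tensor_rels MA g"
      by (simp add: T1_def fadd tensor_rels.addl MOf)
  next
    fix x b b' assume "x \<in> MO"
    then show "(\<lambda>w. delta (T1 (x, b + b')) w - delta (T1 (x, b)) w - delta (T1 (x, b')) w) \<in> tensor_rels MA g"
      by (simp add: T1_def tensor_rels.addr MOf)
  next
    fix x r b assume "x \<in> MO" "r * x \<in> MO"
    then show "(\<lambda>w. delta (T1 (r * x, b)) w - delta (T1 (x, h r * b)) w) \<in> tensor_rels MA g"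
      using MOf[of "r * x"] by (simp add: T1_def fmul happ tensor_rels.smul MOf)
  qed
  have P2: "push T2 u \<in> tensor_rels MO h" if "u \<in> tensor_rels MA g" for u
    using that
  proof (rule push_rels)
    fix y y' b assume y: "y \<in> MA" "y' \<in> MA"
    have D1: "(\<lambda>w. delta (\<pi>, g (sA (y + y')) * b) w - delta (\<pi>, g (sA y + sA y') * b) w) \<in> tensor_rels MO h"
    proof (rule K)
      have e1: "f \<pi> * sA (y + y') = y + y'" by (rule sA[OF MAadd[OF y], symmetric])
      have e2: "f \<pi> * sA y = y" by (rule sA[OF y(1), symmetric])
      have e3: "f \<pi> * sA y' = y'" by (rule sA[OF y(2), symmetric])
      show "f \<pi> * sA (y + y') = f \<pi> * (sA y + sA y')" by (simp only: distrib_left e1 e2 e3)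
    qed
    have D2: "(\<lambda>w. delta (\<pi>, g (sA y) * b + g (sA y') * b) w - delta (\<pi>, g (sA y) * b) w - delta (\<pi>, g (sA y') * b) w)
       \<in> tensor_rels MO h" by (rule tensor_rels.addr[OF piO])
    show "(\<lambda>w. delta (T2 (y + y', b)) w - delta (T2 (y, b)) w - delta (T2 (y', b)) w) \<in> tensor_rels MO h"
    proof -
      have "(\<lambda>w. delta (T2 (y + y', b)) w - delta (T2 (y, b)) w - delta (T2 (y', b)) w) =
        (\<lambda>z. (delta (\<pi>, g (sA (y + y')) * b) z - delta (\<pi>, g (sA y + sA y') * b) z) +
          (delta (\<pi>, g (sA y) * b + g (sA y') * b) z - delta (\<pi>, g (sA y) * b) z - delta (\<pi>, g (sA y') * b) z))"
        by (simp add: T2_def gadd distrib_right fun_eq_iff)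
      with tensor_rels.plus[OF D1 D2] show ?thesis by simp
    qed
  next
    fix y b b' assume "y \<in> MA"
    show "(\<lambda>w. delta (T2 (y, b + b')) w - delta (T2 (y, b)) w - delta (T2 (y, b')) w) \<in> tensor_rels MO h"
      by (simp add: T2_def distrib_left tensor_rels.addr piO)
  next
    fix y r b assume y: "y \<in> MA" "r * y \<in> MA"
    have "(\<lambda>w. delta (\<pi>, g (sA (r * y)) * b) w - delta (\<pi>, g (r * sA y) * b) w) \<in> tensor_rels MO h"
    proof (rule K)
      have e1: "f \<pi> * sA (r * y) = r * y" by (rule sA[OF y(2), symmetric])
      have e2: "f \<pi> * sA y = y" by (rule sA[OF y(1), symmetric])
      show "f \<pi> * sA (r * y) = f \<pi> * (r * sA y)" by (simp only: e1 mult.left_commute[of "f \<pi>" r "sA y"] e2)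
    qed
    then show "(\<lambda>w. delta (T2 (r * y, b)) w - delta (T2 (y, g r * b)) w) \<in> tensor_rels MO h"
      by (simp add: T2_def gmul mult_ac)
  qed
  have "mult_map_injective MA g \<longleftrightarrow> mult_map_injective MO h"
  proof
    assume injA: "mult_map_injective MA g"
    show "mult_map_injective MO h" unfolding mult_map_injective_def
    proof (intro allI impI)
      fix u :: "'o \<times> 'b \<Rightarrow> int"
      assume H: "finite {z. u z \<noteq> 0} \<and> {z. u z \<noteq> 0} \<subseteq> MO \<times> UNIV \<and>
        (\<Sum>z\<in>{z. u z \<noteq> 0}. of_int (u z) * (h (fst z) * snd z)) = 0"
      then have fin: "finite {z. u z \<noteq> 0}" and sub: "{z. u z \<noteq> 0} \<subseteq> MO \<times> UNIV"
        and i0: "img h u = 0" by (auto simp: img_def)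
      have "img g (push T1 u) = img h u"
        by (rule img_push[OF fin]) (auto simp: T1_def happ split: prod.splits)
      moreover have "{w. push T1 u w \<noteq> 0} \<subseteq> MA \<times> UNIV"
        using push_supp[of T1 u] sub MOf by (force simp: T1_def)
      ultimately have "push T1 u \<in> tensor_rels MA g"
        using i0 push_fin[OF fin, of T1]
        by (intro injA[unfolded mult_map_injective_def, rule_format]) (auto simp: img_def)
      then have "push T2 (push T1 u) \<in> tensor_rels MO h" by (rule P2)
      then have pin: "push (T2 \<circ> T1) u \<in> tensor_rels MO h" by (simp add: push_push[OF fin])
      have "(\<lambda>w. u w - push (T2 \<circ> T1) u w) \<in> tensor_rels MO h"
      proof (rule rels_Q[OF fin])
        fix z assume "u z \<noteq> 0"
        then obtain x b where z: "z = (x, b)" and x: "x \<in> MO" using sub by (cases z) auto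
        then obtain r where xr: "x = \<pi> * r" unfolding MO_def mem_pow1 by blast
        have S1: "(\<lambda>w. delta (r * \<pi>, b) w - delta (\<pi>, h r * b) w) \<in> tensor_rels MO h"
          by (rule tensor_rels.smul[OF piO]) (use x xr in \<open>simp add: mult.commute\<close>)
        have S2: "(\<lambda>w. delta (\<pi>, g (sA (f x)) * b) w - delta (\<pi>, g (f r) * b) w) \<in> tensor_rels MO h"
        proof (rule K)
          have "f \<pi> * sA (f x) = f x" by (rule sA[OF MOf[OF x], symmetric])
          also have "f x = f \<pi> * f r" by (simp add: xr fmul)
          finally show "f \<pi> * sA (f x) = f \<pi> * f r" .
        qed
        show "(\<lambda>w. delta z w - delta ((T2 \<circ> T1) z) w) \<in> tensor_rels MO h"
          using rels_diff[OF S1 S2] by (simp add: z T1_def T2_def xr happ mult.commute)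
      qed
      from tensor_rels.plus[OF this pin] show "u \<in> tensor_rels MO h" by simp
    qed
  next
    assume injO: "mult_map_injective MO h"
    show "mult_map_injective MA g" unfolding mult_map_injective_def
    proof (intro allI impI)
      fix u :: "'a \<times> 'b \<Rightarrow> int"
      assume H: "finite {z. u z \<noteq> 0} \<and> {z. u z \<noteq> 0} \<subseteq> MA \<times> UNIV \<and>
        (\<Sum>z\<in>{z. u z \<noteq> 0}. of_int (u z) * (g (fst z) * snd z)) = 0"
      then have fin: "finite {z. u z \<noteq> 0}" and sub: "{z. u z \<noteq> 0} \<subseteq> MA \<times> UNIV"
        and i0: "img g u = 0" by (auto simp: img_def)
      have "img h (push T2 u) = img g u"
      proof (rule img_push[OF fin])
        fix z assume "u z \<noteq> 0"
        then obtain y b where z: "z = (y, b)" and y: "y \<in> MA" using sub by (cases z) auto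
        show "h (fst (T2 z)) * snd (T2 z) = g (fst z) * snd z"
        proof -
          have "h \<pi> * (g (sA y) * b) = g (f \<pi> * sA y) * b" by (simp add: happ gmul mult.assoc)
          also have "f \<pi> * sA y = y" by (rule sA[OF y, symmetric])
          finally show ?thesis by (simp add: z T2_def)
        qed
      qed
      moreover have "{w. push T2 u w \<noteq> 0} \<subseteq> MO \<times> UNIV"
        using push_supp[of T2 u] piO by (force simp: T2_def)
      ultimately have "push T2 u \<in> tensor_rels MO h"
        using i0 push_fin[OF fin, of T2]
        by (intro injO[unfolded mult_map_injective_def, rule_format]) (auto simp: img_def)
      then have "push T1 (push T2 u) \<in> tensor_rels MA g" by (rule P1)
      then have pin: "push (T1 \<circ> T2) u \<in> tensor_rels MA g" by (simp add: push_push[OF fin])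
      have "(\<lambda>w. u w - push (T1 \<circ> T2) u w) \<in> tensor_rels MA g"
      proof (rule rels_Q[OF fin])
        fix z assume "u z \<noteq> 0"
        then obtain y b where z: "z = (y, b)" and y: "y \<in> MA" using sub by (cases z) auto
        have e: "sA y * f \<pi> = y" by (simp only: mult.commute[of "sA y"]) (rule sA[OF y, symmetric])
        have "(\<lambda>w. delta (sA y * f \<pi>, b) w - delta (f \<pi>, g (sA y) * b) w) \<in> tensor_rels MA g"
          by (rule tensor_rels.smul[OF piA]) (simp add: e y)
        then show "(\<lambda>w. delta z w - delta ((T1 \<circ> T2) z) w) \<in> tensor_rels MA g"
          by (simp add: z T1_def T2_def e)
      qed
      from tensor_rels.plus[OF this pin] show "u \<in> tensor_rels MA g" by simp
    qed
  qed
  then show ?thesis unfolding CRP_def MA_def MO_def h_def by simp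
qed

end
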